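(* Consider the Maxwell--Bloch system \[ \dot A=B,\quad \dot B=-\Omega^2A-\sigma B+cj(t),\quad i\hbar\dot C_1=\hbar\omega_1C_1+ia(t)C_2,\quad i\hbar\dot C_2=\hbar\omega_2C_2-ia(t)C_1,\qquad t>0, \] with $j(t)=2q\,\mathrm{Im}[\overline{C_1(t)}C_2(t)]$, $a(t)=\frac qc[A(t)+A_p(t)]$, where $A_p\in C[0,\infty)$ is real-valued. Then there exist constants $d_1,d_2,\gamma>0$ such that every solution with $|C_1(t)|^2+|C_2(t)|^2=1$ satisfies \[ |A(t)|^2+|B(t)|^2\le d_1\big(|A(0)|^2+|B(0)|^2\big)e^{-\gamma t}+d_2,\qquad t>0. \]
   Context: Parameters: $\Omega>0$, $\sigma>0$, $c>0$, $\hbar>0$, real $\omega_2>\omega_1$, $p>0$, $\omega=\omega_2-\omega_1$, $q=\omega p$. Unknowns: $A(t),B(t)\in\mathbb R$, $C_1(t),C_2(t)\in\mathbb C$. *)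

theory Defs
  imports "HOL-Analysis.Analysis"
begin

end

theory Submission
  imports Defs
begin

lemma sq1: fixes s b f :: real assumes s: "s > 0" shows "2*b*f \<le> s/2*b^2 + 2*f^2/s"
proof -
  have "0 \<le> (s/2)*(b - 2*f/s)^2" using s by simp
  also have "\<dots> = s/2*b^2 + 2*f^2/s - 2*b*f" using s by (simp add: field_simps power2_eq_square)
  finally show ?thesis by simp
qed

lemma sq2: fixes w e a f :: real assumes w: "w > 0" and e0: "e \<ge> 0" shows "2*e*a*f \<le> e*w^2*a^2 + e*f^2/w^2"
proof -
  have "0 \<le> e*(w*a - f/w)^2" using e0 by simp
  also have "\<dots> = e*w^2*a^2 + e*f^2/w^2 - 2*e*a*f" using w by (simp add: field_simps power2_eq_square)
  finally show ?thesis by simp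
qed

lemma sq3: fixes w e s a b :: real assumes w: "w > 0" and e0: "e \<ge> 0" shows "-2*e * s*a*b \<le> e*w^2*a^2/2 + 2*e * s^2*b^2/w^2"
proof -
  have "0 \<le> (e/2)*(w*a + 2 * s*b/w)^2" using e0 by simp
  also have "\<dots> = e*w^2*a^2/2 + 2*e * s^2*b^2/w^2 + 2*e * s*a*b" using w by (simp add: field_simps power2_eq_square)
  finally show ?thesis by simp
qed

lemma es_lemma: fixes w s e :: real assumes w: "w > 0" and s: "s > 0" and e: "e = s * w^2 / (4*(w^2+s^2))"
  shows "e \<le> s/4" "2*e*(1 + s^2/w^2) = s/2"
proof -
  have ws: "w^2 + s^2 > 0" using w by (simp add: add_pos_nonneg)
  show "2*e*(1 + s^2/w^2) = s/2" using e w ws by (simp add: field_simps power2_eq_square)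
  have "e \<le> s*(w^2+s^2)/(4*(w^2+s^2))" unfolding e using s ws
    by (intro divide_right_mono mult_left_mono) auto
  also have "\<dots> = s/4" using ws by (simp del: mult_2 add: field_simps)
  finally show "e \<le> s/4" .
qed

lemma linpart:
  fixes BF SB F2S F2S' EAF EWA EFW EFW' ESAB ES2B EEAB EB :: real
  assumes "2*BF \<le> SB/2 + 2*F2S" "2*EAF \<le> EWA + EFW" "-2*ESAB \<le> EWA/2 + 2*ES2B"
    "2/3*EEAB \<le> EWA/6 + EB/6" "2*EB + 2*ES2B = SB/2" "EB \<le> SB/4" "F2S \<le> F2S'" "EFW \<le> EFW'" "SB \<ge> 0"
  shows "-2*SB + 2*BF + 2*EB - 2*EWA - 2*ESAB + 2*EAF + EWA/3 + EB/3 + 2/3*EEAB \<le> 2*F2S' + EFW'"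
  using assms by linarith
lemma L: fixes w s e a b f :: real shows "2*w^2*a*b + 2*b*(-(w^2)*a - s*b + f) + 2*e*(b^2 + a*(-(w^2)*a - s*b + f))
          + (e/3)*(w^2*a^2+b^2+2*e*a*b) = -2*(s*b^2) + 2*(b*f) + 2*(e*b^2) - 2*(e*w^2*a^2) - 2*(e * s*a*b) + 2*(e*a*f) + (e*w^2*a^2)/3 + (e*b^2)/3 + 2/3*(e*(e*a*b))"
  by (simp add: algebra_simps power2_eq_square)

lemma h4gen:
  fixes w e a b :: real
  assumes w: "w > 0" and eO: "e^2 \<le> w^2/4"
  shows "2*e*a*b \<le> w^2*a^2/2 + b^2/2"
proof -
  have "0 \<le> (1/2)*(w*a - 2*e*b/w)^2" by simp
  also have "\<dots> = w^2*a^2/2 + 2*e^2*b^2/w^2 - 2*e*a*b" using w by (simp add: field_simps power2_eq_square)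
  finally have 1: "2*e*a*b \<le> w^2*a^2/2 + 2*e^2*b^2/w^2" by simp
  have "2*e^2*b^2/w^2 \<le> 2*(w^2/4)*b^2/w^2"
    using eO w by (intro divide_right_mono mult_right_mono) auto
  also have "\<dots> = b^2/2" using w by simp
  finally show ?thesis using 1 by simp
qed

lemma eO_lemma:
  fixes w s e :: real
  assumes w: "w > 0" and s: "s > 0" and e: "e = s * w^2 / (4*(w^2+s^2))"
  shows "e > 0" "e^2 \<le> w^2/4"
proof -
  have ws: "w^2 + s^2 > 0" using w by (simp add: add_pos_nonneg)
  show e0: "e > 0" unfolding e using w s ws by (intro divide_pos_pos mult_pos_pos) auto
  have "2*(s*w) \<le> w^2+s^2" using sum_squares_bound[of w s] by (simp add: power2_eq_square algebra_simps)
  then have "e \<le> s*w^2/(4*(2*(s*w)))" unfolding e using w s ws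
    by (intro divide_left_mono) (auto intro!: mult_pos_pos)
  also have "\<dots> = w/8" using w s by (simp add: field_simps power2_eq_square)
  finally have "e \<le> w/8" .
  then have "e^2 \<le> (w/8)^2" using e0 by (intro power_mono) auto
  also have "(w/8)^2 = w^2/64" by (simp add: power_divide)
  also have "w^2/64 \<le> w^2/4" by simp
  finally show "e^2 \<le> w^2/4" .
qed


lemma ineq:
  fixes w s e a b f F :: real
  assumes w: "w > 0" and s: "s > 0" and e: "e = s * w^2 / (4*(w^2+s^2))" and fF: "\<bar>f\<bar> \<le> F"
  shows "2*w^2*a*b + 2*b*(-(w^2)*a - s*b + f) + 2*e*(b^2 + a*(-(w^2)*a - s*b + f))
          + (e/3)*(w^2*a^2+b^2+2*e*a*b) \<le> 2*F^2/s + e*F^2/w^2"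
proof -
  have e0: "e > 0" and eO: "e^2 \<le> w^2/4" using eO_lemma[OF w s e] by auto
  have es: "e \<le> s/4" and eb: "2*e*(1 + s^2/w^2) = s/2" using es_lemma[OF w s e] by auto
  have f2: "f^2 \<le> F^2" using power_mono[OF fF abs_ge_zero[of f], of 2] by simp
  have h1: "2*(b*f) \<le> (s*b^2)/2 + 2*(f^2/s)" using sq1[OF s, of b f] by simp
  have h2: "2*(e*a*f) \<le> e*w^2*a^2 + e*f^2/w^2" using sq2[OF w, of e a f] e0 by simp
  have h3: "-2*(e * s*a*b) \<le> (e*w^2*a^2)/2 + 2*(e * s^2*b^2/w^2)" using sq3[OF w, of e s a b] e0 by simp
  have h4: "2*e*a*b \<le> w^2*a^2/2 + b^2/2" using h4gen[OF w eO] .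
  have "(e/3)*(2*e*a*b) \<le> (e/3)*(w^2*a^2/2 + b^2/2)" using h4 e0 by (intro mult_left_mono) auto
  then have h4': "2/3*(e*(e*a*b)) \<le> (e*w^2*a^2)/6 + (e*b^2)/6" by (simp add: algebra_simps)
  have "2*e*b^2 + 2*e * s^2*b^2/w^2 = (2*e*(1 + s^2/w^2))*b^2" using w by (simp add: field_simps)
  then have eb2: "2*(e*b^2) + 2*(e * s^2*b^2/w^2) = (s*b^2)/2" using eb by simp
  have eb3: "e*b^2 \<le> (s*b^2)/4" using es mult_right_mono[OF es, of "b^2"] by simp
  have f2a: "f^2/s \<le> F^2/s" using f2 s by (intro divide_right_mono) auto
  have f2b: "e*f^2/w^2 \<le> e*F^2/w^2" using f2 e0 by (intro divide_right_mono mult_left_mono) auto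
  have SB: "s*b^2 \<ge> 0" using s by simp
  have "2*w^2*a*b + 2*b*(-(w^2)*a - s*b + f) + 2*e*(b^2 + a*(-(w^2)*a - s*b + f))
          + (e/3)*(w^2*a^2+b^2+2*e*a*b) \<le> 2*(F^2/s) + e*F^2/w^2"
    unfolding L by (rule linpart[OF h1 h2 h3 h4' eb2 eb3 f2a f2b SB])
  then show ?thesis by simp
qed

lemma decay:
  fixes V V' :: "real \<Rightarrow> real" and g K t :: real
  assumes g: "g > 0" and K: "K \<ge> 0" and cV: "continuous_on {0..} V"
    and dV: "\<And>x. x > 0 \<Longrightarrow> (V has_real_derivative V' x) (at x)"
    and ineq: "\<And>x. x > 0 \<Longrightarrow> V' x + g * V x \<le> K"
    and t: "t > 0"
  shows "V t \<le> V 0 * exp (- g * t) + K / g"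
proof -
  define W where "W x = (V x - K/g) * exp (g * x)" for x
  have dW: "(W has_real_derivative (V' x + g * V x - K) * exp (g * x)) (at x)" if "x > 0" for x
  proof -
    have "(W has_real_derivative V' x * exp (g * x) + (V x - K/g) * (exp (g * x) * g)) (at x)"
      unfolding W_def using dV[OF that]
      by (auto intro!: derivative_eq_intros)
    moreover have "V' x * exp (g * x) + (V x - K/g) * (exp (g * x) * g) = (V' x + g * V x - K) * exp (g * x)"
      using g by (simp add: field_simps)
    ultimately show ?thesis by simp
  qed
  have cW: "continuous_on {0..t} W"
    unfolding W_def
    by (intro continuous_intros continuous_on_subset[OF cV]) auto
  obtain l z where z: "0 < z" "z < t" and dz: "(W has_real_derivative l) (at z)" and eq: "W t - W 0 = (t - 0) * l"
    using MVT[OF t cW] dW by (metis real_differentiable_def)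
  have "l = (V' z + g * V z - K) * exp (g * z)" using DERIV_unique[OF dz dW[OF z(1)]] .
  also have "\<dots> \<le> 0" using ineq[OF z(1)] by (simp add: mult_nonpos_nonneg)
  finally have "W t \<le> W 0" using eq t mult_nonneg_nonpos[of t l] by simp
  then have "(V t - K/g) * exp (g * t) \<le> V 0 - K/g" by (simp add: W_def)
  then have "V t - K/g \<le> (V 0 - K/g) * exp (- g * t)"
    by (simp add: exp_minus field_simps)
  also have "\<dots> \<le> V 0 * exp (- g * t)" using K g by (simp add: algebra_simps)
  finally show ?thesis by simp
qed

lemma quad:
  fixes w s e a b :: real
  assumes w: "w > 0" and s: "s > 0" and e: "e = s * w^2 / (4*(w^2+s^2))"
  shows "a^2 + b^2 \<le> (2/w^2 + 2) * (w^2*a^2 + b^2 + 2*e*a*b)"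
    "w^2*a^2 + b^2 + 2*e*a*b \<le> 3/2*(w^2+1)*(a^2+b^2)"
proof -
  have eO: "e^2 \<le> w^2/4" using eO_lemma[OF w s e] by simp
  have u: "2*e*a*b \<le> w^2*a^2/2 + b^2/2" using h4gen[OF w eO] .
  have l: "2*e*a*(-b) \<le> w^2*a^2/2 + (-b)^2/2" using h4gen[OF w eO] .
  have lo: "w^2*a^2/2 + b^2/2 \<le> w^2*a^2 + b^2 + 2*e*a*b" using l by simp
  have "a^2 + b^2 \<le> (2/w^2 + 2) * (w^2*a^2/2 + b^2/2)"
  proof -
    have "(2/w^2 + 2) * (w^2*a^2/2 + b^2/2) = a^2 + b^2 + (w^2*a^2 + b^2/w^2)"
      using w by (simp add: distrib_left distrib_right add_divide_distrib)
    moreover have "0 \<le> w^2*a^2 + b^2/w^2" by simp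
    ultimately show ?thesis by linarith
  qed
  also have "\<dots> \<le> (2/w^2 + 2) * (w^2*a^2 + b^2 + 2*e*a*b)"
    using lo w by (intro mult_left_mono) auto
  finally show "a^2 + b^2 \<le> (2/w^2 + 2) * (w^2*a^2 + b^2 + 2*e*a*b)" .
  have "w^2*a^2 + b^2 + 2*e*a*b \<le> 3/2*(w^2*a^2) + 3/2*b^2" using u by simp
  also have "\<dots> \<le> 3/2*(w^2+1)*(a^2+b^2)"
  proof -
    have "3/2*(w^2+1)*(a^2+b^2) = 3/2*(w^2*a^2) + 3/2*b^2 + 3/2*(w^2*b^2 + a^2)"
      by (simp add: distrib_left distrib_right)
    moreover have "0 \<le> 3/2*(w^2*b^2 + a^2)" by simp
    ultimately show ?thesis by linarith
  qed
  finally show "w^2*a^2 + b^2 + 2*e*a*b \<le> 3/2*(w^2+1)*(a^2+b^2)" .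
qed

lemma fbound:
  fixes x y :: complex and c q :: real
  assumes "(cmod x)^2 + (cmod y)^2 = 1" "c > 0" "q > 0"
  shows "\<bar>c * (2 * q * Im (cnj x * y))\<bar> \<le> c * q"
proof -
  have "\<bar>Im (cnj x * y)\<bar> \<le> cmod (cnj x * y)" by (rule abs_Im_le_cmod)
  also have "\<dots> = cmod x * cmod y" by (simp add: norm_mult)
  also have "\<dots> \<le> 1/2"
  proof -
    have "0 \<le> (cmod x - cmod y)^2" by simp
    then show ?thesis using assms(1) by (simp add: power2_diff)
  qed
  finally have "\<bar>Im (cnj x * y)\<bar> \<le> 1/2" .
  then have "\<bar>2 * q * Im (cnj x * y)\<bar> \<le> q" using assms by (simp add: abs_mult)
  then show ?thesis using assms by (simp add: abs_mult)
qed

theorem corollary2p2: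
  fixes \<Omega> \<sigma> c \<h> \<omega>\<^sub>1 \<omega>\<^sub>2 p \<omega> q :: real
    and Ap :: "real \<Rightarrow> real"
  assumes "\<Omega> > 0" "\<sigma> > 0" "c > 0" "\<h> > 0" "\<omega>\<^sub>2 > \<omega>\<^sub>1" "p > 0"
    and "\<omega> = \<omega>\<^sub>2 - \<omega>\<^sub>1" and "q = \<omega> * p"
    and "continuous_on {0..} Ap"
  shows "\<exists>d\<^sub>1 d\<^sub>2 \<gamma>. d\<^sub>1 > 0 \<and> d\<^sub>2 > 0 \<and> \<gamma> > 0 \<and>
    (\<forall>(A::real \<Rightarrow> real) (B::real \<Rightarrow> real) (C\<^sub>1::real \<Rightarrow> complex) (C\<^sub>2::real \<Rightarrow> complex).
      (continuous_on {0..} A \<and> continuous_on {0..} B \<and>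
       continuous_on {0..} C\<^sub>1 \<and> continuous_on {0..} C\<^sub>2 \<and>
       (\<forall>t\<ge>0. (cmod (C\<^sub>1 t))\<^sup>2 + (cmod (C\<^sub>2 t))\<^sup>2 = 1) \<and>
       (\<forall>t>0.
          (A has_real_derivative B t) (at t) \<and>
          (B has_real_derivative
             (- \<Omega>\<^sup>2 * A t - \<sigma> * B t + c * (2 * q * Im (cnj (C\<^sub>1 t) * C\<^sub>2 t)))) (at t) \<and>
          (\<exists>D\<^sub>1. (C\<^sub>1 has_vector_derivative D\<^sub>1) (at t) \<and>
             \<i> * complex_of_real \<h> * D\<^sub>1 =
               complex_of_real (\<h> * \<omega>\<^sub>1) * C\<^sub>1 t
               + \<i> * complex_of_real (q / c * (A t + Ap t)) * C\<^sub>2 t) \<and>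
          (\<exists>D\<^sub>2. (C\<^sub>2 has_vector_derivative D\<^sub>2) (at t) \<and>
             \<i> * complex_of_real \<h> * D\<^sub>2 =
               complex_of_real (\<h> * \<omega>\<^sub>2) * C\<^sub>2 t
               - \<i> * complex_of_real (q / c * (A t + Ap t)) * C\<^sub>1 t)))
      \<longrightarrow> (\<forall>t>0. (A t)\<^sup>2 + (B t)\<^sup>2
                 \<le> d\<^sub>1 * ((A 0)\<^sup>2 + (B 0)\<^sup>2) * exp (- \<gamma> * t) + d\<^sub>2))"
proof -
  define F where "F = c * q"
  define e where "e = \<sigma> * \<Omega>^2 / (4*(\<Omega>^2+\<sigma>^2))"
  define g where "g = e/3"
  define K where "K = 2*F^2/\<sigma> + e*F^2/\<Omega>^2"
  define k where "k = 2/\<Omega>^2 + 2"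
  define d1 where "d1 = k*(3/2*(\<Omega>^2+1))"
  define d2 where "d2 = k*K/g + 1"
  have q: "q > 0" using assms by simp
  have e0: "e > 0" using eO_lemma[OF assms(1,2) e_def] by simp
  have g0: "g > 0" using e0 g_def by simp
  have K0: "K \<ge> 0" unfolding K_def using assms e0 by (intro add_nonneg_nonneg) auto
  have k0: "k > 0" unfolding k_def using assms by (intro add_nonneg_pos) auto
  have d10: "d1 > 0" unfolding d1_def using k0 by (intro mult_pos_pos) (auto intro: add_nonneg_pos)
  have d20: "d2 > 0" unfolding d2_def using k0 K0 g0 by (intro add_nonneg_pos) auto
  show ?thesis
  proof (rule exI[of _ d1], rule exI[of _ d2], rule exI[of _ g], intro conjI d10 d20 g0 allI impI)
    fix A B :: "real \<Rightarrow> real" and C1 C2 :: "real \<Rightarrow> complex" and t :: real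
    assume H: "continuous_on {0..} A \<and> continuous_on {0..} B \<and>
       continuous_on {0..} C1 \<and> continuous_on {0..} C2 \<and>
       (\<forall>t\<ge>0. (cmod (C1 t))\<^sup>2 + (cmod (C2 t))\<^sup>2 = 1) \<and>
       (\<forall>t>0.
          (A has_real_derivative B t) (at t) \<and>
          (B has_real_derivative
             (- \<Omega>\<^sup>2 * A t - \<sigma> * B t + c * (2 * q * Im (cnj (C1 t) * C2 t)))) (at t) \<and>
          (\<exists>D\<^sub>1. (C1 has_vector_derivative D\<^sub>1) (at t) \<and>
             \<i> * complex_of_real \<h> * D\<^sub>1 =
               complex_of_real (\<h> * \<omega>\<^sub>1) * C1 t
               + \<i> * complex_of_real (q / c * (A t + Ap t)) * C2 t) \<and>
          (\<exists>D\<^sub>2. (C2 has_vector_derivative D\<^sub>2) (at t) \<and>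
             \<i> * complex_of_real \<h> * D\<^sub>2 =
               complex_of_real (\<h> * \<omega>\<^sub>2) * C2 t
               - \<i> * complex_of_real (q / c * (A t + Ap t)) * C1 t))"
    assume t: "t > 0"
    define f where "f x = c * (2 * q * Im (cnj (C1 x) * C2 x))" for x
    have cA: "continuous_on {0..} A" and cB: "continuous_on {0..} B" using H by auto
    have dA: "(A has_real_derivative B x) (at x)" if "x > 0" for x using H that by auto
    have dB: "(B has_real_derivative (- \<Omega>\<^sup>2 * A x - \<sigma> * B x + f x)) (at x)" if "x > 0" for x
      using H that unfolding f_def by auto
    have fb: "\<bar>f x\<bar> \<le> F" if "x > 0" for x
      unfolding f_def F_def using H that assms(3) q by (intro fbound) auto
    define V where "V x = \<Omega>^2*(A x)^2 + (B x)^2 + 2*e*(A x)*(B x)" for x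
    define V' where "V' x = 2*\<Omega>^2*(A x)*(B x) + 2*(B x)*(-(\<Omega>^2)*(A x) - \<sigma>*(B x) + f x)
        + 2*e*((B x)^2 + (A x)*(-(\<Omega>^2)*(A x) - \<sigma>*(B x) + f x))" for x
    have cV: "continuous_on {0..} V" unfolding V_def
      by (intro continuous_intros cA cB)
    have dV: "(V has_real_derivative V' x) (at x)" if "x > 0" for x
      unfolding V_def V'_def
      by (auto intro!: derivative_eq_intros dA[OF that] dB[OF that] simp: algebra_simps power2_eq_square)
    have iV: "V' x + g * V x \<le> K" if "x > 0" for x
      unfolding V_def V'_def g_def K_def by (rule ineq[OF assms(1,2) e_def fb[OF that]])
    have dec: "V t \<le> V 0 * exp (- g * t) + K / g"
      by (rule decay[OF g0 K0 cV dV iV t])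
    have "(A t)^2 + (B t)^2 \<le> k * V t"
      using quad(1)[OF assms(1,2) e_def, of "A t" "B t"] unfolding V_def k_def by simp
    also have "\<dots> \<le> k * (V 0 * exp (- g * t) + K / g)"
      using dec k0 by (intro mult_left_mono) auto
    also have "\<dots> = k * V 0 * exp (- g * t) + k * K / g" by (simp add: algebra_simps)
    also have "\<dots> \<le> d1 * ((A 0)^2 + (B 0)^2) * exp (- g * t) + d2"
    proof -
      have "V 0 \<le> 3/2*(\<Omega>^2+1)*((A 0)^2 + (B 0)^2)"
        using quad(2)[OF assms(1,2) e_def, of "A 0" "B 0"] unfolding V_def by simp
      then have "k * V 0 \<le> k * (3/2*(\<Omega>^2+1)*((A 0)^2 + (B 0)^2))"
        using k0 by (intro mult_left_mono) auto
      then have "k * V 0 * exp (- g * t) \<le> k * (3/2*(\<Omega>^2+1)*((A 0)^2 + (B 0)^2)) * exp (- g * t)"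
        by (intro mult_right_mono) auto
      also have "\<dots> = d1 * ((A 0)^2 + (B 0)^2) * exp (- g * t)" unfolding d1_def by (simp add: algebra_simps)
      finally have "k * V 0 * exp (- g * t) \<le> d1 * ((A 0)^2 + (B 0)^2) * exp (- g * t)" .
      then show ?thesis unfolding d2_def by linarith
    qed
    finally show "(A t)\<^sup>2 + (B t)\<^sup>2 \<le> d1 * ((A 0)\<^sup>2 + (B 0)\<^sup>2) * exp (- g * t) + d2" .
  qed
qed

end
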